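(* Let $\Gamma$ be a countable group and let $\mathcal P\subseteq\mathrm{Sub}_{[\infty]}(\Gamma)$ be any subset satisfying condition $(\ast)$. Let $\overline{\mathcal P}$ denote the closure of $\mathcal P$ in $\mathrm{Sub}_{[\infty]}(\Gamma)$. Then $\mathcal{HT}(\Gamma)\cap\overline{\mathcal P}$ is a dense $G_\delta$ subset of $\overline{\mathcal P}$.
   Context: $\mathrm{Sub}(\Gamma)$ is the set of subgroups with the topology generated by the clopen sets $\{\Lambda:\mathcal I\subseteq\Lambda,\ \mathcal O\cap\Lambda=\emptyset\}$, $\mathcal I,\mathcal O$ finite; $\mathrm{Sub}_{[\infty]}(\Gamma)$ is the subspace of infinite index subgroups. $\mathcal{HT}(\Gamma)$ is the set of infinite index $\Lambda$ with $\Lambda\backslash\Gamma\curvearrowleft\Gamma$ (right multiplication) highly transitive. Condition $(\ast)$ for $\mathcal P$: for every $\Lambda\in\mathcal P$, every $d\ge1$, every $g_1,\dots,g_{2d}\in\Gamma$ with $\Lambda g_1,\dots,\Lambda g_{2d}$ pairwise distinct, and every neighborhood $\mathcal V$ of $\Lambda$, there exist $\Lambda'\in\mathcal P\cap\mathcal V$ and $\gamma\in\Gamma$ with $\Lambda' g_i\gamma=\Lambda' g_{i+d}$ for all $i\in\{1,\dots,d\}$. *)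

theory Defs
  imports "HOL-Analysis.Analysis" "HOL-Algebra.Algebra"
begin

definition Sub_top :: "('a, 'b) monoid_scheme \<Rightarrow> 'a set topology" where
  "Sub_top G = topology_generated_by
     {{\<Lambda>. subgroup \<Lambda> G \<and> I \<subseteq> \<Lambda> \<and> Out \<inter> \<Lambda> = {}} | I Out.
        finite I \<and> finite Out \<and> I \<subseteq> carrier G \<and> Out \<subseteq> carrier G}"

definition Sub_inf_top :: "('a, 'b) monoid_scheme \<Rightarrow> 'a set topology" where
  "Sub_inf_top G = subtopology (Sub_top G)
     {\<Lambda>. subgroup \<Lambda> G \<and> infinite (rcosets\<^bsub>G\<^esub> \<Lambda>)}"

definition highly_transitive_coset_action :: "('a, 'b) monoid_scheme \<Rightarrow> 'a set \<Rightarrow> bool" where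
  "highly_transitive_coset_action G \<Lambda> \<longleftrightarrow>
     (\<forall>n::nat. \<forall>x y. (\<forall>i<n. x i \<in> rcosets\<^bsub>G\<^esub> \<Lambda> \<and> y i \<in> rcosets\<^bsub>G\<^esub> \<Lambda>)
        \<and> inj_on x {..<n} \<and> inj_on y {..<n} \<longrightarrow>
        (\<exists>\<gamma>\<in>carrier G. \<forall>i<n. x i #>\<^bsub>G\<^esub> \<gamma> = y i))"

definition HT :: "('a, 'b) monoid_scheme \<Rightarrow> 'a set set" where
  "HT G = {\<Lambda>. subgroup \<Lambda> G \<and> infinite (rcosets\<^bsub>G\<^esub> \<Lambda>)
               \<and> highly_transitive_coset_action G \<Lambda>}"

definition cond_star :: "('a, 'b) monoid_scheme \<Rightarrow> 'a set set \<Rightarrow> bool" where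
  "cond_star G P \<longleftrightarrow>
     (\<forall>\<Lambda>\<in>P. \<forall>d::nat. d \<ge> 1 \<longrightarrow>
       (\<forall>g::nat \<Rightarrow> 'a. (\<forall>i\<in>{1..2*d}. g i \<in> carrier G)
          \<and> inj_on (\<lambda>i. \<Lambda> #>\<^bsub>G\<^esub> g i) {1..2*d} \<longrightarrow>
        (\<forall>V. openin (Sub_inf_top G) V \<and> \<Lambda> \<in> V \<longrightarrow>
          (\<exists>\<Lambda>'\<in>P \<inter> V. \<exists>\<gamma>\<in>carrier G. \<forall>i\<in>{1..d}.
              (\<Lambda>' #>\<^bsub>G\<^esub> g i) #>\<^bsub>G\<^esub> \<gamma> = \<Lambda>' #>\<^bsub>G\<^esub> g (i + d)))))"

end

theory Submission imports Defs begin

definition Bas :: "('a, 'b) monoid_scheme \<Rightarrow> 'a set \<Rightarrow> 'a set \<Rightarrow> 'a set set" where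
  "Bas G I E = {\<Lambda>. subgroup \<Lambda> G \<and> I \<subseteq> \<Lambda> \<and> E \<inter> \<Lambda> = {}}"

definition fs :: "('a, 'b) monoid_scheme \<Rightarrow> 'a set \<Rightarrow> bool" where
  "fs G A \<longleftrightarrow> finite A \<and> A \<subseteq> carrier G"

lemma Sub_top_family:
  "{{\<Lambda>. subgroup \<Lambda> G \<and> I \<subseteq> \<Lambda> \<and> Out \<inter> \<Lambda> = {}} | I Out.
        finite I \<and> finite Out \<and> I \<subseteq> carrier G \<and> Out \<subseteq> carrier G}
   = {Bas G I E | I E. fs G I \<and> fs G E}"
  unfolding Bas_def fs_def by (intro Collect_cong ex_cong1) auto

lemma Sub_top_alt: "Sub_top G = topology_generated_by {Bas G I E | I E. fs G I \<and> fs G E}"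
  unfolding Sub_top_def Sub_top_family ..

lemma Bas_Int: "Bas G I E \<inter> Bas G I' E' = Bas G (I \<union> I') (E \<union> E')"
  unfolding Bas_def by blast

lemma fs_Un: "fs G A \<Longrightarrow> fs G B \<Longrightarrow> fs G (A \<union> B)"
  unfolding fs_def by auto

lemma fs_empty[simp]: "fs G {}" unfolding fs_def by auto

lemma Bas_mem: "fs G I \<Longrightarrow> fs G E \<Longrightarrow> Bas G I E \<in> {Bas G I E | I E. fs G I \<and> fs G E}"
  by (rule CollectI, rule exI[of _ I], rule exI[of _ E]) simp

lemma topspace_Sub_top: "topspace (Sub_top G) = {\<Lambda>. subgroup \<Lambda> G}"
proof -
  have "\<Union>{Bas G I E | I E. fs G I \<and> fs G E} = {\<Lambda>. subgroup \<Lambda> G}"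
  proof
    show "\<Union>{Bas G I E | I E. fs G I \<and> fs G E} \<subseteq> {\<Lambda>. subgroup \<Lambda> G}"
      unfolding Bas_def by auto
    show "{\<Lambda>. subgroup \<Lambda> G} \<subseteq> \<Union>{Bas G I E | I E. fs G I \<and> fs G E}"
    proof
      fix \<Lambda> assume "\<Lambda> \<in> {\<Lambda>. subgroup \<Lambda> G}"
      then have "\<Lambda> \<in> Bas G {} {}" unfolding Bas_def by auto
      moreover have "Bas G {} {} \<in> {Bas G I E | I E. fs G I \<and> fs G E}" by (rule Bas_mem) simp_all
      ultimately show "\<Lambda> \<in> \<Union>{Bas G I E | I E. fs G I \<and> fs G E}" by (rule UnionI[rotated])
    qed
  qed
  then show ?thesis unfolding Sub_top_alt topology_generated_by_topspace .
qed

lemma Bas_open: "fs G I \<Longrightarrow> fs G E \<Longrightarrow> openin (Sub_top G) (Bas G I E)"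
  unfolding Sub_top_alt by (rule topology_generated_by_Basis) (rule Bas_mem)

lemma open_Sub_top_D:
  assumes "openin (Sub_top G) U" "\<Lambda> \<in> U"
  shows "\<exists>I E. fs G I \<and> fs G E \<and> \<Lambda> \<in> Bas G I E \<and> Bas G I E \<subseteq> U"
proof -
  have "generate_topology_on {Bas G I E | I E. fs G I \<and> fs G E} U"
    using assms(1) unfolding Sub_top_alt by (rule openin_topology_generated_by)
  then have "\<forall>\<Lambda>\<in>U. \<exists>I E. fs G I \<and> fs G E \<and> \<Lambda> \<in> Bas G I E \<and> Bas G I E \<subseteq> U"
  proof induction
    case Empty
    then show ?case by simp
  next
    case (Int a b)
    show ?case
    proof
      fix \<Lambda> assume L: "\<Lambda> \<in> a \<inter> b"
      obtain I E where 1: "fs G I" "fs G E" "\<Lambda> \<in> Bas G I E" "Bas G I E \<subseteq> a"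
        using Int.IH(1) L by auto
      obtain I' E' where 2: "fs G I'" "fs G E'" "\<Lambda> \<in> Bas G I' E'" "Bas G I' E' \<subseteq> b"
        using Int.IH(2) L by auto
      have "fs G (I \<union> I')" "fs G (E \<union> E')" using 1 2 by (simp_all add: fs_Un)
      moreover have "\<Lambda> \<in> Bas G (I \<union> I') (E \<union> E')" "Bas G (I \<union> I') (E \<union> E') \<subseteq> a \<inter> b"
        using 1 2 unfolding Bas_Int[symmetric] by auto
      ultimately show "\<exists>I E. fs G I \<and> fs G E \<and> \<Lambda> \<in> Bas G I E \<and> Bas G I E \<subseteq> a \<inter> b"
        by (intro exI[of _ "I \<union> I'"] exI[of _ "E \<union> E'"]) auto
    qed
  next
    case (UN K)
    show ?case
    proof
      fix \<Lambda> assume "\<Lambda> \<in> \<Union>K"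
      then obtain k where k: "k \<in> K" "\<Lambda> \<in> k" by auto
      then obtain I E where "fs G I" "fs G E" "\<Lambda> \<in> Bas G I E" "Bas G I E \<subseteq> k"
        using UN.IH by meson
      moreover have "k \<subseteq> \<Union>K" using k by auto
      ultimately show "\<exists>I E. fs G I \<and> fs G E \<and> \<Lambda> \<in> Bas G I E \<and> Bas G I E \<subseteq> \<Union>K"
        by (intro exI[of _ I] exI[of _ E]) auto
    qed
  next
    case (Basis s)
    then obtain I E where "s = Bas G I E" "fs G I" "fs G E" by auto
    then show ?case by (intro ballI exI[of _ I] exI[of _ E]) auto
  qed
  then show ?thesis using assms(2) by auto
qed

lemma open_Sub_top_I:
  assumes "\<And>\<Lambda>. \<Lambda> \<in> U \<Longrightarrow> \<exists>I E. fs G I \<and> fs G E \<and> \<Lambda> \<in> Bas G I E \<and> Bas G I E \<subseteq> U"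
  shows "openin (Sub_top G) U"
proof -
  let ?K = "{V. openin (Sub_top G) V \<and> V \<subseteq> U}"
  have "U = \<Union>?K"
  proof
    show "U \<subseteq> \<Union>?K"
    proof
      fix \<Lambda> assume "\<Lambda> \<in> U"
      then obtain I E where "fs G I" "fs G E" "\<Lambda> \<in> Bas G I E" "Bas G I E \<subseteq> U" using assms by meson
      then have "Bas G I E \<in> ?K" "\<Lambda> \<in> Bas G I E" using Bas_open by auto
      then show "\<Lambda> \<in> \<Union>?K" by (rule UnionI)
    qed
  qed auto
  moreover have "openin (Sub_top G) (\<Union>?K)"
    by (rule openin_Union) auto
  ultimately show ?thesis by simp
qed


context group
begin

lemma rcos_eq_iff:
  assumes "subgroup H G" "a \<in> carrier G" "b \<in> carrier G"
  shows "(H #> a = H #> b) \<longleftrightarrow> a \<otimes> inv b \<in> H"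
proof
  assume "H #> a = H #> b"
  moreover have "a \<in> H #> a" using assms by (simp add: rcos_self)
  ultimately have "a \<in> H #> b" by simp
  then show "a \<otimes> inv b \<in> H" using subgroup.rcos_module_imp[OF assms(1) is_group assms(3)] by simp
next
  assume "a \<otimes> inv b \<in> H"
  then have "a \<in> H #> b" using subgroup.rcos_module_rev[OF assms(1) is_group assms(3) assms(2)] by simp
  then have "H #> b = H #> a" using repr_independence assms by blast
  then show "H #> a = H #> b" by simp
qed

lemma rcos_mult:
  assumes "subgroup H G" "a \<in> carrier G" "g \<in> carrier G"
  shows "(H #> a) #> g = H #> (a \<otimes> g)"
  using coset_mult_assoc assms subgroup.subset by blast

definition dc :: "'a set \<Rightarrow> 'a list \<Rightarrow> bool" where
  "dc H xs \<longleftrightarrow> distinct (map (\<lambda>a. H #> a) xs)"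

definition quo :: "'a list \<Rightarrow> 'a set" where
  "quo xs = (\<lambda>p. xs ! fst p \<otimes> inv (xs ! snd p)) `
      {p. fst p < length xs \<and> snd p < length xs \<and> fst p \<noteq> snd p}"

lemma quo_fs: "set xs \<subseteq> carrier G \<Longrightarrow> fs G (quo xs)"
proof -
  assume xs: "set xs \<subseteq> carrier G"
  have "{p. fst p < length xs \<and> snd p < length xs \<and> fst p \<noteq> snd p} \<subseteq> {..<length xs} \<times> {..<length xs}"
    by auto
  then have "finite {p. fst p < length xs \<and> snd p < length xs \<and> fst p \<noteq> snd p}"
    by (rule finite_subset) simp
  then have "finite (quo xs)" unfolding quo_def by simp
  moreover have "quo xs \<subseteq> carrier G" unfolding quo_def using xs
    by (auto dest!: nth_mem)
  ultimately show ?thesis unfolding fs_def by simp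
qed

lemma dc_quo:
  assumes "subgroup H G" "set xs \<subseteq> carrier G"
  shows "dc H xs \<longleftrightarrow> quo xs \<inter> H = {}"
proof -
  have "dc H xs \<longleftrightarrow> (\<forall>i<length xs. \<forall>j<length xs. i \<noteq> j \<longrightarrow> H #> xs!i \<noteq> H #> xs!j)"
    unfolding dc_def distinct_conv_nth by simp
  also have "\<dots> \<longleftrightarrow> (\<forall>i<length xs. \<forall>j<length xs. i \<noteq> j \<longrightarrow> xs!i \<otimes> inv (xs!j) \<notin> H)"
  proof -
    have "\<And>i j. i < length xs \<Longrightarrow> j < length xs \<Longrightarrow> (H #> xs!i = H #> xs!j) \<longleftrightarrow> xs!i \<otimes> inv (xs!j) \<in> H"
      using assms(2) by (intro rcos_eq_iff[OF assms(1)]) (auto dest!: nth_mem)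
    then show ?thesis by auto
  qed
  also have "\<dots> \<longleftrightarrow> quo xs \<inter> H = {}"
  proof
    assume A: "\<forall>i<length xs. \<forall>j<length xs. i \<noteq> j \<longrightarrow> xs!i \<otimes> inv (xs!j) \<notin> H"
    show "quo xs \<inter> H = {}" using A unfolding quo_def by auto
  next
    assume A: "quo xs \<inter> H = {}"
    show "\<forall>i<length xs. \<forall>j<length xs. i \<noteq> j \<longrightarrow> xs!i \<otimes> inv (xs!j) \<notin> H"
    proof (intro allI impI)
      fix i j assume ij: "i < length xs" "j < length xs" "i \<noteq> j"
      have "xs!i \<otimes> inv (xs!j) \<in> quo xs" unfolding quo_def
        by (rule image_eqI[of _ _ "(i,j)"]) (use ij in auto)
      then show "xs!i \<otimes> inv (xs!j) \<notin> H" using A by auto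
    qed
  qed
  finally show ?thesis .
qed

definition Wt :: "'a list \<Rightarrow> 'a list \<Rightarrow> 'a set set" where
  "Wt xs ys = {H. subgroup H G \<and> (\<not> dc H xs \<or> \<not> dc H ys \<or>
      (\<exists>\<gamma>\<in>carrier G. \<forall>i<length xs. xs!i \<otimes> \<gamma> \<otimes> inv (ys!i) \<in> H))}"

definition Cnt :: "nat \<Rightarrow> 'a set set" where
  "Cnt k = {H. subgroup H G \<and> (\<exists>xs. length xs = k \<and> set xs \<subseteq> carrier G \<and> dc H xs)}"

lemma Cnt_open: "openin (Sub_top G) (Cnt k)"
proof (rule open_Sub_top_I)
  fix H assume "H \<in> Cnt k"
  then obtain xs where H: "subgroup H G" "length xs = k" "set xs \<subseteq> carrier G" "dc H xs"
    unfolding Cnt_def by auto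
  have "H \<in> Bas G {} (quo xs)" using H dc_quo unfolding Bas_def by auto
  moreover have "Bas G {} (quo xs) \<subseteq> Cnt k"
  proof
    fix H' assume "H' \<in> Bas G {} (quo xs)"
    then have "subgroup H' G" "quo xs \<inter> H' = {}" unfolding Bas_def by auto
    then show "H' \<in> Cnt k" unfolding Cnt_def using H dc_quo by auto
  qed
  moreover have "fs G {}" "fs G (quo xs)" using H quo_fs by auto
  ultimately show "\<exists>I E. fs G I \<and> fs G E \<and> H \<in> Bas G I E \<and> Bas G I E \<subseteq> Cnt k"
    by (intro exI[of _ "{}"] exI[of _ "quo xs"]) auto
qed

lemma Wt_open:
  assumes "set xs \<subseteq> carrier G" "set ys \<subseteq> carrier G"
  shows "openin (Sub_top G) (Wt xs ys)"
proof (rule open_Sub_top_I)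
  fix H assume H: "H \<in> Wt xs ys"
  then have sH: "subgroup H G" unfolding Wt_def by auto
  show "\<exists>I E. fs G I \<and> fs G E \<and> H \<in> Bas G I E \<and> Bas G I E \<subseteq> Wt xs ys"
  proof (cases "dc H xs \<and> dc H ys")
    case False
    then obtain zs where zs: "zs = xs \<or> zs = ys" "\<not> dc H zs" by auto
    then have zsc: "set zs \<subseteq> carrier G" using assms by auto
    then obtain q where q: "q \<in> quo zs" "q \<in> H" using zs dc_quo[OF sH] by auto
    have "fs G {q}" using q quo_fs[OF zsc] unfolding fs_def by auto
    moreover have "H \<in> Bas G {q} {}" using q sH unfolding Bas_def by auto
    moreover have "Bas G {q} {} \<subseteq> Wt xs ys"
    proof
      fix H' assume "H' \<in> Bas G {q} {}"
      then have "subgroup H' G" "q \<in> H'" unfolding Bas_def by auto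
      then have "\<not> dc H' zs" using dc_quo[OF _ zsc] q by auto
      then show "H' \<in> Wt xs ys" using zs \<open>subgroup H' G\<close> unfolding Wt_def by auto
    qed
    ultimately show ?thesis by (intro exI[of _ "{q}"] exI[of _ "{}"]) auto
  next
    case True
    then obtain \<gamma> where g: "\<gamma> \<in> carrier G" "\<forall>i<length xs. xs!i \<otimes> \<gamma> \<otimes> inv (ys!i) \<in> H"
      using H unfolding Wt_def by auto
    define A where "A = (\<lambda>i. xs!i \<otimes> \<gamma> \<otimes> inv (ys!i)) ` {..<length xs}"
    have "A \<subseteq> H" using g unfolding A_def by auto
    then have "fs G A" unfolding fs_def A_def using sH subgroup.subset by auto
    moreover have "H \<in> Bas G A {}" using \<open>A \<subseteq> H\<close> sH unfolding Bas_def by auto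
    moreover have "Bas G A {} \<subseteq> Wt xs ys"
    proof
      fix H' assume "H' \<in> Bas G A {}"
      then have "subgroup H' G" "A \<subseteq> H'" unfolding Bas_def by auto
      then show "H' \<in> Wt xs ys" using g unfolding Wt_def A_def by auto
    qed
    ultimately show ?thesis by (intro exI[of _ A] exI[of _ "{}"]) auto
  qed
qed


definition rep :: "'a set \<Rightarrow> 'a set \<Rightarrow> 'a" where
  "rep H c = (SOME a. a \<in> carrier G \<and> c = H #> a)"

lemma rep_prop:
  assumes "c \<in> rcosets H"
  shows "rep H c \<in> carrier G \<and> H #> rep H c = c"
proof -
  have "\<exists>a. a \<in> carrier G \<and> c = H #> a" using assms unfolding RCOSETS_def by auto
  then have "rep H c \<in> carrier G \<and> c = H #> rep H c" unfolding rep_def by (rule someI_ex)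
  then show ?thesis by simp
qed

lemma fresh:
  assumes "subgroup H G" "infinite (rcosets H)" "finite F"
  shows "\<exists>ks. length ks = n \<and> set ks \<subseteq> carrier G \<and> dc H ks \<and> (\<forall>k\<in>set ks. H #> k \<notin> F)"
proof -
  have "infinite (rcosets H - F)" using assms by (simp add: Diff_infinite_finite)
  then obtain C where C: "finite C" "card C = n" "C \<subseteq> rcosets H - F"
    using infinite_arbitrarily_large by blast
  obtain cs where cs: "set cs = C" "distinct cs" using finite_distinct_list[OF C(1)] by blast
  define ks where "ks = map (rep H) cs"
  have "map (\<lambda>a. H #> a) ks = cs"
    unfolding ks_def map_map by (rule map_idI) (use rep_prop cs C in auto)
  moreover have "length cs = n" using cs C distinct_card by metis
  moreover have "set ks \<subseteq> carrier G" unfolding ks_def using rep_prop cs C by auto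
  ultimately show ?thesis using cs C unfolding dc_def
    by (intro exI[of _ ks]) (auto simp: ks_def[symmetric] dest: arg_cong[where f=set])
qed

lemma infinite_iff_Cnt:
  assumes "subgroup H G"
  shows "infinite (rcosets H) \<longleftrightarrow> (\<forall>k. H \<in> Cnt k)"
proof
  assume "infinite (rcosets H)"
  then show "\<forall>k. H \<in> Cnt k" using fresh[OF assms, of "{}"] assms unfolding Cnt_def by auto
next
  assume A: "\<forall>k. H \<in> Cnt k"
  show "infinite (rcosets H)"
  proof
    assume fin: "finite (rcosets H)"
    obtain xs where xs: "length xs = Suc (card (rcosets H))" "set xs \<subseteq> carrier G" "dc H xs"
      using A unfolding Cnt_def by blast
    have "set (map (\<lambda>a. H #> a) xs) \<subseteq> rcosets H"
      using xs(2) rcosetsI[OF subgroup.subset[OF assms]] by auto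
    then have "card (set (map (\<lambda>a. H #> a) xs)) \<le> card (rcosets H)"
      using fin card_mono by blast
    moreover have "card (set (map (\<lambda>a. H #> a) xs)) = length xs"
      using xs(3) unfolding dc_def using distinct_card by fastforce
    ultimately show False using xs(1) by simp
  qed
qed

lemma dc_inj:
  assumes "dc H xs"
  shows "inj_on (\<lambda>i. H #> xs!i) {..<length xs}"
  using assms unfolding dc_def distinct_conv_nth inj_on_def by auto

lemma HT_iff:
  assumes sH: "subgroup H G"
  shows "highly_transitive_coset_action G H \<longleftrightarrow>
    (\<forall>xs ys. length xs = length ys \<and> set xs \<subseteq> carrier G \<and> set ys \<subseteq> carrier G \<longrightarrow> H \<in> Wt xs ys)"
proof
  assume HTa: "highly_transitive_coset_action G H"
  show "\<forall>xs ys. length xs = length ys \<and> set xs \<subseteq> carrier G \<and> set ys \<subseteq> carrier G \<longrightarrow> H \<in> Wt xs ys"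
  proof (intro allI impI)
    fix xs ys assume a: "length xs = length ys \<and> set xs \<subseteq> carrier G \<and> set ys \<subseteq> carrier G"
    show "H \<in> Wt xs ys"
    proof (cases "dc H xs \<and> dc H ys")
      case False
      then show ?thesis using sH unfolding Wt_def by auto
    next
      case True
      let ?n = "length xs"
      have xc: "xs!i \<in> carrier G" if "i < ?n" for i
      proof -
        have "xs!i \<in> set xs" using that by (rule nth_mem)
        then show ?thesis using a by auto
      qed
      have yc: "ys!i \<in> carrier G" if "i < ?n" for i
      proof -
        have "ys!i \<in> set ys" using that a by (simp add: nth_mem)
        then show ?thesis using a by auto
      qed
      have "\<forall>i<?n. H #> xs!i \<in> rcosets H \<and> H #> ys!i \<in> rcosets H"
        using xc yc rcosetsI[OF subgroup.subset[OF sH]] by simp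
      moreover have "inj_on (\<lambda>i. H #> xs!i) {..<?n}" using True dc_inj by blast
      moreover have "inj_on (\<lambda>i. H #> ys!i) {..<?n}" using True dc_inj[of H ys] a by simp
      ultimately have "\<exists>\<gamma>\<in>carrier G. \<forall>i<?n. (H #> xs!i) #> \<gamma> = H #> ys!i"
        using HTa unfolding highly_transitive_coset_action_def
        apply -
        apply (drule spec[of _ ?n], drule spec[of _ "\<lambda>i. H #> xs!i"], drule spec[of _ "\<lambda>i. H #> ys!i"])
        by simp
      then obtain \<gamma> where g: "\<gamma> \<in> carrier G" "\<forall>i<?n. (H #> xs!i) #> \<gamma> = H #> ys!i" by blast
      have "\<forall>i<?n. xs!i \<otimes> \<gamma> \<otimes> inv (ys!i) \<in> H"
      proof (intro allI impI)
        fix i assume i: "i < ?n"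
        have "H #> (xs!i \<otimes> \<gamma>) = H #> ys!i" using g i rcos_mult[OF sH xc[OF i] g(1)] by simp
        then show "xs!i \<otimes> \<gamma> \<otimes> inv (ys!i) \<in> H"
          using rcos_eq_iff[OF sH] xc[OF i] yc[OF i] g(1) by simp
      qed
      then show ?thesis using sH g(1) unfolding Wt_def by auto
    qed
  qed
next
  assume A: "\<forall>xs ys. length xs = length ys \<and> set xs \<subseteq> carrier G \<and> set ys \<subseteq> carrier G \<longrightarrow> H \<in> Wt xs ys"
  show "highly_transitive_coset_action G H"
    unfolding highly_transitive_coset_action_def
  proof (intro allI impI)
    fix n and x y :: "nat \<Rightarrow> 'a set"
    assume c: "(\<forall>i<n. x i \<in> rcosets H \<and> y i \<in> rcosets H) \<and> inj_on x {..<n} \<and> inj_on y {..<n}"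
    define xs where "xs = map (\<lambda>i. rep H (x i)) [0..<n]"
    define ys where "ys = map (\<lambda>i. rep H (y i)) [0..<n]"
    have len: "length xs = n" "length ys = n" unfolding xs_def ys_def by auto
    have xsi: "xs!i \<in> carrier G \<and> x i = H #> xs!i" if "i < n" for i
    proof -
      have "x i \<in> rcosets H" using c that by simp
      then show ?thesis unfolding xs_def using that rep_prop[of "x i" H] by simp
    qed
    have ysi: "ys!i \<in> carrier G \<and> y i = H #> ys!i" if "i < n" for i
    proof -
      have "y i \<in> rcosets H" using c that by simp
      then show ?thesis unfolding ys_def using that rep_prop[of "y i" H] by simp
    qed
    have sx: "set xs \<subseteq> carrier G"
    proof
      fix a assume "a \<in> set xs"
      then obtain i where "i < n" "a = xs!i" using len by (metis in_set_conv_nth)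
      then show "a \<in> carrier G" using xsi by simp
    qed
    have sy: "set ys \<subseteq> carrier G"
    proof
      fix a assume "a \<in> set ys"
      then obtain i where "i < n" "a = ys!i" using len by (metis in_set_conv_nth)
      then show "a \<in> carrier G" using ysi by simp
    qed
    have "map (\<lambda>a. H #> a) xs = map x [0..<n]"
      by (rule nth_equalityI) (use len xsi in auto)
    then have dx: "dc H xs" unfolding dc_def using c by (simp add: distinct_map lessThan_atLeast0)
    have "map (\<lambda>a. H #> a) ys = map y [0..<n]"
      by (rule nth_equalityI) (use len ysi in auto)
    then have dy: "dc H ys" unfolding dc_def using c by (simp add: distinct_map lessThan_atLeast0)
    have "H \<in> Wt xs ys" using A len sx sy by auto
    then obtain \<gamma> where g: "\<gamma> \<in> carrier G" "\<forall>i<n. xs!i \<otimes> \<gamma> \<otimes> inv (ys!i) \<in> H"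
      using dx dy len unfolding Wt_def by auto
    show "\<exists>\<gamma>\<in>carrier G. \<forall>i<n. x i #> \<gamma> = y i"
    proof (intro bexI[OF _ g(1)] allI impI)
      fix i assume i: "i < n"
      have "x i #> \<gamma> = H #> (xs!i \<otimes> \<gamma>)" using xsi[OF i] rcos_mult[OF sH _ g(1)] by simp
      also have "\<dots> = H #> ys!i" using rcos_eq_iff[OF sH] xsi[OF i] ysi[OF i] g i by simp
      also have "\<dots> = y i" using ysi[OF i] by simp
      finally show "x i #> \<gamma> = y i" .
    qed
  qed
qed


lemma topspace_Sub_inf:
  "topspace (Sub_inf_top G) = {H. subgroup H G \<and> infinite (rcosets H)}"
  unfolding Sub_inf_top_def topspace_subtopology topspace_Sub_top by auto

lemma open_Sub_inf_Bas:
  assumes "fs G I" "fs G E"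
  shows "openin (Sub_inf_top G) (Bas G I E \<inter> topspace (Sub_inf_top G))"
  unfolding topspace_Sub_inf unfolding Sub_inf_top_def
  by (rule openin_subtopology_Int[OF Bas_open[OF assms]])

lemma star_step:
  assumes cs: "cond_star G P" and PS: "P \<subseteq> topspace (Sub_inf_top G)" and L: "\<Lambda> \<in> P"
    and zs: "set zs \<subseteq> carrier G" "length zs = 2*d" "d \<ge> 1" "dc \<Lambda> zs"
    and V: "openin (Sub_inf_top G) V" "\<Lambda> \<in> V"
  shows "\<exists>\<Lambda>'\<in>P \<inter> V. \<exists>\<gamma>\<in>carrier G. \<forall>i<d. zs!i \<otimes> \<gamma> \<otimes> inv (zs!(i+d)) \<in> \<Lambda>'"
proof -
  define g where "g = (\<lambda>i. zs!(i-1))"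
  have zc: "zs!i \<in> carrier G" if "i < length zs" for i
  proof -
    have "zs!i \<in> set zs" using that by (rule nth_mem)
    then show ?thesis using zs by auto
  qed
  have gc: "\<forall>i\<in>{1..2*d}. g i \<in> carrier G" unfolding g_def using zc zs(2) by auto
  have ginj: "inj_on (\<lambda>i. \<Lambda> #> g i) {1..2*d}"
  proof (rule inj_onI)
    fix i j assume ij: "i \<in> {1..2*d}" "j \<in> {1..2*d}" "\<Lambda> #> g i = \<Lambda> #> g j"
    have "i - 1 \<in> {..<length zs}" "j - 1 \<in> {..<length zs}" using ij zs(2) by auto
    moreover have "\<Lambda> #> zs!(i-1) = \<Lambda> #> zs!(j-1)" using ij unfolding g_def by simp
    ultimately have "i - 1 = j - 1" using dc_inj[OF zs(4)] unfolding inj_on_def by blast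
    then show "i = j" using ij by auto
  qed
  have "\<forall>\<Lambda>\<in>P. \<forall>d::nat. d \<ge> 1 \<longrightarrow>
       (\<forall>g::nat \<Rightarrow> 'a. (\<forall>i\<in>{1..2*d}. g i \<in> carrier G)
          \<and> inj_on (\<lambda>i. \<Lambda> #> g i) {1..2*d} \<longrightarrow>
        (\<forall>V. openin (Sub_inf_top G) V \<and> \<Lambda> \<in> V \<longrightarrow>
          (\<exists>\<Lambda>'\<in>P \<inter> V. \<exists>\<gamma>\<in>carrier G. \<forall>i\<in>{1..d}.
              (\<Lambda>' #> g i) #> \<gamma> = \<Lambda>' #> g (i + d))))"
    using cs unfolding cond_star_def .
  then have "\<exists>\<Lambda>'\<in>P \<inter> V. \<exists>\<gamma>\<in>carrier G. \<forall>i\<in>{1..d}. (\<Lambda>' #> g i) #> \<gamma> = \<Lambda>' #> g (i + d)"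
    apply -
    apply (drule bspec[OF _ L], drule spec[of _ d], drule mp[OF _ zs(3)], drule spec[of _ g],
       drule mp[OF _ conjI[OF gc ginj]], drule spec[of _ V], drule mp[OF _ conjI[OF V]])
    by assumption
  then obtain \<Lambda>' \<gamma> where L': "\<Lambda>' \<in> P \<inter> V" "\<gamma> \<in> carrier G"
    "\<forall>i\<in>{1..d}. (\<Lambda>' #> g i) #> \<gamma> = \<Lambda>' #> g (i + d)" by blast
  have sL': "subgroup \<Lambda>' G" using L' PS topspace_Sub_inf by auto
  have "\<forall>i<d. zs!i \<otimes> \<gamma> \<otimes> inv (zs!(i+d)) \<in> \<Lambda>'"
  proof (intro allI impI)
    fix i assume i: "i < d"
    have "(\<Lambda>' #> g (i+1)) #> \<gamma> = \<Lambda>' #> g (i + 1 + d)" using L'(3) i by auto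
    then have "(\<Lambda>' #> zs!i) #> \<gamma> = \<Lambda>' #> zs!(i+d)" unfolding g_def by simp
    moreover have "i < length zs" "i + d < length zs" using i zs(2) by auto
    ultimately have "\<Lambda>' #> (zs!i \<otimes> \<gamma>) = \<Lambda>' #> zs!(i+d)"
      using rcos_mult[OF sL' zc L'(2)] by simp
    then show "zs!i \<otimes> \<gamma> \<otimes> inv (zs!(i+d)) \<in> \<Lambda>'"
      using rcos_eq_iff[OF sL'] zc \<open>i < length zs\<close> \<open>i + d < length zs\<close> L'(2) by simp
  qed
  then show ?thesis using L' by blast
qed


lemma telescope:
  assumes "a \<in> carrier G" "g1 \<in> carrier G" "k \<in> carrier G" "g2 \<in> carrier G" "y \<in> carrier G"
  shows "a \<otimes> (g1 \<otimes> g2) \<otimes> inv y = (a \<otimes> g1 \<otimes> inv k) \<otimes> (k \<otimes> g2 \<otimes> inv y)"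
  using assms by (simp add: m_assoc, simp add: m_assoc[symmetric])

lemma Wt_dense:
  assumes cs: "cond_star G P" and PS: "P \<subseteq> topspace (Sub_inf_top G)"
    and H0: "H0 \<in> P" "H0 \<in> Bas G I E" and IE: "fs G I" "fs G E"
    and xs: "set xs \<subseteq> carrier G" "set ys \<subseteq> carrier G" "length xs = length ys"
  shows "\<exists>H2\<in>P. H2 \<in> Bas G I E \<and> H2 \<in> Wt xs ys"
proof -
  have sH0: "subgroup H0 G" and inf0: "infinite (rcosets H0)"
    using H0 PS topspace_Sub_inf by auto
  show ?thesis
  proof (cases "dc H0 xs \<and> dc H0 ys \<and> length xs \<noteq> 0")
    case False
    then have "H0 \<in> Wt xs ys" using sH0 unfolding Wt_def by auto
    then show ?thesis using H0 by blast
  next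
    case True
    define n where "n = length xs"
    have n1: "n \<ge> 1" using True n_def by (auto simp: Suc_le_eq)
    have lys: "length ys = n" using xs n_def by simp
    define F where "F = (\<lambda>a. H0 #> a) ` (set xs \<union> set ys)"
    have "finite F" unfolding F_def by simp
    then obtain ks where ks: "length ks = n" "set ks \<subseteq> carrier G" "dc H0 ks" "\<forall>k\<in>set ks. H0 #> k \<notin> F"
      using fresh[OF sH0 inf0] by blast
    have dxk: "dc H0 (xs @ ks)" using True ks unfolding dc_def F_def by auto
    have dky: "dc H0 (ks @ ys)" using True ks unfolding dc_def F_def by auto
    have cxk: "set (xs @ ks) \<subseteq> carrier G" and cky: "set (ks @ ys) \<subseteq> carrier G" using xs ks by auto
    define V1 where "V1 = Bas G I (E \<union> quo (ks @ ys)) \<inter> topspace (Sub_inf_top G)"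
    have oV1: "openin (Sub_inf_top G) V1" unfolding V1_def
      by (rule open_Sub_inf_Bas[OF IE(1) fs_Un[OF IE(2) quo_fs[OF cky]]])
    have "quo (ks @ ys) \<inter> H0 = {}" using dc_quo[OF sH0 cky] dky by simp
    then have "H0 \<in> V1" using H0 PS unfolding V1_def Bas_def by auto
    then obtain H1 \<gamma>1 where H1: "H1 \<in> P \<inter> V1" "\<gamma>1 \<in> carrier G"
      "\<forall>i<n. (xs @ ks)!i \<otimes> \<gamma>1 \<otimes> inv ((xs @ ks)!(i+n)) \<in> H1"
      using star_step[OF cs PS H0(1) cxk _ n1 dxk oV1] ks(1) n_def by force
    have H1': "\<forall>i<n. xs!i \<otimes> \<gamma>1 \<otimes> inv (ks!i) \<in> H1"
    proof (intro allI impI)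
      fix i assume "i < n"
      then show "xs!i \<otimes> \<gamma>1 \<otimes> inv (ks!i) \<in> H1" using H1(3) n_def by (auto simp: nth_append)
    qed
    have sH1: "subgroup H1 G" using H1 unfolding V1_def Bas_def by auto
    have "quo (ks @ ys) \<inter> H1 = {}" using H1 unfolding V1_def Bas_def by auto
    then have dky1: "dc H1 (ks @ ys)" using dc_quo[OF sH1 cky] by simp
    define A1 where "A1 = (\<lambda>i. xs!i \<otimes> \<gamma>1 \<otimes> inv (ks!i)) ` {..<n}"
    have A1H1: "A1 \<subseteq> H1" using H1' unfolding A1_def by auto
    have fA1: "fs G A1" unfolding fs_def A1_def using A1H1 subgroup.subset[OF sH1] A1_def by auto
    define V2 where "V2 = Bas G (I \<union> A1) E \<inter> topspace (Sub_inf_top G)"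
    have oV2: "openin (Sub_inf_top G) V2" unfolding V2_def
      by (rule open_Sub_inf_Bas[OF fs_Un[OF IE(1) fA1] IE(2)])
    have "H1 \<in> V2" using H1 A1H1 unfolding V2_def V1_def Bas_def by auto
    then obtain H2 \<gamma>2 where H2: "H2 \<in> P \<inter> V2" "\<gamma>2 \<in> carrier G"
      "\<forall>i<n. (ks @ ys)!i \<otimes> \<gamma>2 \<otimes> inv ((ks @ ys)!(i+n)) \<in> H2"
      using star_step[OF cs PS _ cky _ n1 dky1 oV2] H1(1) ks(1) lys by force
    have H2': "\<forall>i<n. ks!i \<otimes> \<gamma>2 \<otimes> inv (ys!i) \<in> H2"
    proof (intro allI impI)
      fix i assume "i < n"
      then show "ks!i \<otimes> \<gamma>2 \<otimes> inv (ys!i) \<in> H2" using H2(3) ks(1) by (auto simp: nth_append)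
    qed
    have sH2: "subgroup H2 G" using H2 unfolding V2_def Bas_def by auto
    have A1H2: "A1 \<subseteq> H2" using H2 unfolding V2_def Bas_def by auto
    have "\<forall>i<length xs. xs!i \<otimes> (\<gamma>1 \<otimes> \<gamma>2) \<otimes> inv (ys!i) \<in> H2"
    proof (intro allI impI)
      fix i assume i: "i < length xs"
      have c: "xs!i \<in> carrier G" "ks!i \<in> carrier G" "ys!i \<in> carrier G"
      proof -
        have "xs!i \<in> set xs" "ks!i \<in> set ks" "ys!i \<in> set ys"
          using i n_def ks(1) lys by (simp_all add: nth_mem)
        then show "xs!i \<in> carrier G" "ks!i \<in> carrier G" "ys!i \<in> carrier G"
          using xs ks by auto
      qed
      have "xs!i \<otimes> \<gamma>1 \<otimes> inv (ks!i) \<in> H2" using A1H2 i n_def unfolding A1_def by auto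
      moreover have "ks!i \<otimes> \<gamma>2 \<otimes> inv (ys!i) \<in> H2" using H2' i n_def by auto
      ultimately have "(xs!i \<otimes> \<gamma>1 \<otimes> inv (ks!i)) \<otimes> (ks!i \<otimes> \<gamma>2 \<otimes> inv (ys!i)) \<in> H2"
        using subgroup.m_closed[OF sH2] by blast
      then show "xs!i \<otimes> (\<gamma>1 \<otimes> \<gamma>2) \<otimes> inv (ys!i) \<in> H2"
        using telescope[OF c(1) H1(2) c(2) H2(2) c(3)] by simp
    qed
    then have "H2 \<in> Wt xs ys" using sH2 H1(2) H2(2) unfolding Wt_def by auto
    moreover have "H2 \<in> Bas G I E" using H2 unfolding V2_def Bas_def by auto
    ultimately show ?thesis using H2 by blast
  qed
qed

end

lemma fin_mono:
  assumes "finite A" "\<And>n. Xs n \<subseteq> Xs (Suc n)" "\<forall>a\<in>A. \<exists>n. a \<in> Xs n"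
  shows "\<exists>n. A \<subseteq> Xs n"
  using assms(1,3)
proof (induction A rule: finite_induct)
  case empty
  then show ?case by simp
next
  case (insert a A)
  then obtain m1 m2 where "a \<in> Xs m1" "A \<subseteq> Xs m2" by auto
  moreover have "Xs m1 \<subseteq> Xs (max m1 m2)" "Xs m2 \<subseteq> Xs (max m1 m2)"
    using lift_Suc_mono_le[of Xs, OF assms(2)] by auto
  ultimately show ?case by (intro exI[of _ "max m1 m2"]) auto
qed

lemma Bas_anti: "I \<subseteq> I' \<Longrightarrow> E \<subseteq> E' \<Longrightarrow> Bas G I' E' \<subseteq> Bas G I E"
  unfolding Bas_def by auto

lemma fs_insert: "fs G A \<Longrightarrow> a \<in> carrier G \<Longrightarrow> fs G (insert a A)"
  unfolding fs_def by auto

context group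
begin

lemma construct:
  fixes W :: "nat \<Rightarrow> 'a set set"
  assumes cG: "countable (carrier G)"
    and Wo: "\<And>k. openin (Sub_top G) (W k)"
    and Wd: "\<And>k I E. fs G I \<Longrightarrow> fs G E \<Longrightarrow> Bas G I E \<inter> P \<noteq> {} \<Longrightarrow> Bas G I E \<inter> P \<inter> W k \<noteq> {}"
    and st: "fs G I0" "fs G E0" "Bas G I0 E0 \<inter> P \<noteq> {}"
  shows "\<exists>H. H \<in> Bas G I0 E0 \<and> (\<forall>k. H \<in> W k) \<and>
     (\<forall>I E. fs G I \<longrightarrow> fs G E \<longrightarrow> H \<in> Bas G I E \<longrightarrow> Bas G I E \<inter> P \<noteq> {})"
proof -
  define e where "e = from_nat_into (carrier G)"
  have ne: "carrier G \<noteq> {}" using one_closed by blast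
  have ec: "e k \<in> carrier G" for k unfolding e_def using from_nat_into[OF ne] .
  have erange: "\<exists>k. e k = a" if "a \<in> carrier G" for a
  proof -
    have "a \<in> range e" unfolding e_def using range_from_nat_into[OF ne cG] that by simp
    then show ?thesis by auto
  qed
  define good where "good c \<longleftrightarrow> fs G (fst c) \<and> fs G (snd c) \<and> Bas G (fst c) (snd c) \<inter> P \<noteq> {}" for c
  have step: "\<exists>c'. good c' \<and> (fst c \<subseteq> fst c' \<and> snd c \<subseteq> snd c' \<and> (e k \<in> fst c' \<or> e k \<in> snd c')
        \<and> Bas G (fst c') (snd c') \<subseteq> W k)" if gc: "good c" for c and k :: nat
  proof -
    obtain H where H: "H \<in> Bas G (fst c) (snd c)" "H \<in> P" "H \<in> W k"
      using Wd[of "fst c" "snd c" k] gc unfolding good_def by auto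
    obtain I1 E1 where IE1: "fs G I1" "fs G E1" "H \<in> Bas G I1 E1" "Bas G I1 E1 \<subseteq> W k"
      using open_Sub_top_D[OF Wo H(3)] by blast
    show ?thesis
    proof (cases "e k \<in> H")
      case True
      define c' where "c' = (insert (e k) (fst c \<union> I1), snd c \<union> E1)"
      have "H \<in> Bas G (fst c') (snd c')" using H IE1 True unfolding c'_def Bas_def by auto
      moreover have "fs G (fst c')" "fs G (snd c')" unfolding c'_def
        using gc IE1 ec unfolding good_def by (auto intro!: fs_insert fs_Un)
      moreover have "Bas G (fst c') (snd c') \<subseteq> W k"
        using IE1(4) Bas_anti[of I1 "fst c'" E1 "snd c'"] unfolding c'_def by auto
      ultimately show ?thesis using H(2) unfolding good_def
        by (intro exI[of _ c']) (auto simp: c'_def)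
    next
      case False
      define c' where "c' = (fst c \<union> I1, insert (e k) (snd c \<union> E1))"
      have "H \<in> Bas G (fst c') (snd c')" using H IE1 False unfolding c'_def Bas_def by auto
      moreover have "fs G (fst c')" "fs G (snd c')" unfolding c'_def
        using gc IE1 ec unfolding good_def by (auto intro!: fs_insert fs_Un)
      moreover have "Bas G (fst c') (snd c') \<subseteq> W k"
        using IE1(4) Bas_anti[of I1 "fst c'" E1 "snd c'"] unfolding c'_def by auto
      ultimately show ?thesis using H(2) unfolding good_def
        by (intro exI[of _ c']) (auto simp: c'_def)
    qed
  qed
  have "\<exists>f. \<forall>n. (good (f n) \<and> (n = 0 \<longrightarrow> f n = (I0, E0))) \<and>
      (fst (f n) \<subseteq> fst (f (Suc n)) \<and> snd (f n) \<subseteq> snd (f (Suc n)) \<and>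
       (e n \<in> fst (f (Suc n)) \<or> e n \<in> snd (f (Suc n))) \<and> Bas G (fst (f (Suc n))) (snd (f (Suc n))) \<subseteq> W n)"
  proof (rule dependent_nat_choice)
    show "\<exists>x. good x \<and> (0 = 0 \<longrightarrow> x = (I0, E0))" using st unfolding good_def by auto
  next
    fix x and n :: nat assume "good x \<and> (n = 0 \<longrightarrow> x = (I0, E0))"
    then obtain c' where "good c'" "fst x \<subseteq> fst c' \<and> snd x \<subseteq> snd c' \<and> (e n \<in> fst c' \<or> e n \<in> snd c')
        \<and> Bas G (fst c') (snd c') \<subseteq> W n" using step by blast
    then show "\<exists>y. (good y \<and> (Suc n = 0 \<longrightarrow> y = (I0, E0))) \<and>
        (fst x \<subseteq> fst y \<and> snd x \<subseteq> snd y \<and> (e n \<in> fst y \<or> e n \<in> snd y) \<and> Bas G (fst y) (snd y) \<subseteq> W n)"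
      by (intro exI[of _ c']) auto
  qed
  then obtain f :: "nat \<Rightarrow> 'a set \<times> 'a set" where fall: "\<forall>n. (good (f n) \<and> (n = 0 \<longrightarrow> f n = (I0, E0))) \<and>
      (fst (f n) \<subseteq> fst (f (Suc n)) \<and> snd (f n) \<subseteq> snd (f (Suc n)) \<and>
       (e n \<in> fst (f (Suc n)) \<or> e n \<in> snd (f (Suc n))) \<and> Bas G (fst (f (Suc n))) (snd (f (Suc n))) \<subseteq> W n)"
    by (rule exE)
  have f: "\<And>n::nat. good (f n)" "f 0 = (I0, E0)"
    "\<And>n::nat. fst (f n) \<subseteq> fst (f (Suc n))" "\<And>n::nat. snd (f n) \<subseteq> snd (f (Suc n))"
    "\<And>n::nat. e n \<in> fst (f (Suc n)) \<or> e n \<in> snd (f (Suc n))"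
    "\<And>n::nat. Bas G (fst (f (Suc n))) (snd (f (Suc n))) \<subseteq> W n"
    using fall by simp_all
  define Is where "Is n = fst (f n)" for n
  define Es where "Es n = snd (f n)" for n
  have IsS: "\<And>n. Is n \<subseteq> Is (Suc n)" unfolding Is_def using f(3) .
  have EsS: "\<And>n. Es n \<subseteq> Es (Suc n)" unfolding Es_def using f(4) .
  have Imono: "Is m \<subseteq> Is n" if "m \<le> n" for m n
    using lift_Suc_mono_le[of Is, OF IsS that] .
  have Emono: "Es m \<subseteq> Es n" if "m \<le> n" for m n
    using lift_Suc_mono_le[of Es, OF EsS that] .
  have exL: "\<exists>\<Lambda>. \<Lambda> \<in> P \<and> subgroup \<Lambda> G \<and> Is n \<subseteq> \<Lambda> \<and> Es n \<inter> \<Lambda> = {}" for n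
    using f(1)[of n] unfolding good_def Is_def Es_def Bas_def by auto
  have Isc: "Is n \<subseteq> carrier G" for n using f(1)[of n] unfolding good_def Is_def fs_def by auto
  define Hs where "Hs = (\<Union>n. Is n)"
  have F1: "a \<notin> Hs" if "a \<in> Es n" for a n
  proof
    assume "a \<in> Hs"
    then obtain m where "a \<in> Is m" unfolding Hs_def by auto
    obtain \<Lambda> where "Is (max m n) \<subseteq> \<Lambda>" "Es (max m n) \<inter> \<Lambda> = {}" using exL by blast
    moreover have "a \<in> Is (max m n)" "a \<in> Es (max m n)"
      using \<open>a \<in> Is m\<close> that Imono[of m "max m n"] Emono[of n "max m n"] by auto
    ultimately show False by auto
  qed
  have F2: "a \<in> Hs \<or> (\<exists>n. a \<in> Es n)" if aG: "a \<in> carrier G" for a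
  proof -
    obtain k where "e k = a" using erange[OF aG] by blast
    then have "a \<in> Is (Suc k) \<or> a \<in> Es (Suc k)" using f(5)[of k] unfolding Is_def Es_def by simp
    then show ?thesis unfolding Hs_def by blast
  qed
  have finI: "\<exists>m. A \<subseteq> Is m" if "finite A" "A \<subseteq> Hs" for A
    by (rule fin_mono[of A Is, OF that(1) IsS]) (use that in \<open>auto simp: Hs_def\<close>)
  have F5: "x \<in> Hs" if x: "x \<in> carrier G" "finite A" "A \<subseteq> Hs"
      "\<And>\<Lambda>. subgroup \<Lambda> G \<Longrightarrow> A \<subseteq> \<Lambda> \<Longrightarrow> x \<in> \<Lambda>" for x A
  proof (rule ccontr)
    assume "x \<notin> Hs"
    then obtain n where n: "x \<in> Es n" using F2 x(1) by blast
    obtain m where m: "A \<subseteq> Is m" using finI x(2,3) by blast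
    obtain \<Lambda> where L: "subgroup \<Lambda> G" "Is (max m n) \<subseteq> \<Lambda>" "Es (max m n) \<inter> \<Lambda> = {}" using exL by blast
    have "A \<subseteq> \<Lambda>" using m L(2) Imono[of m "max m n"] by auto
    then have "x \<in> \<Lambda>" using x(4) L(1) by blast
    moreover have "x \<in> Es (max m n)" using n Emono[of n "max m n"] by auto
    ultimately show False using L(3) by auto
  qed
  have HsG: "subgroup Hs G"
  proof (rule subgroupI)
    show "Hs \<subseteq> carrier G" unfolding Hs_def using Isc by auto
    have "\<one> \<in> Hs" by (rule F5[of _ "{}"]) (auto intro: subgroup.one_closed)
    then show "Hs \<noteq> {}" by auto
  next
    fix a assume a: "a \<in> Hs"
    then have ac: "a \<in> carrier G" unfolding Hs_def using Isc by auto
    show "inv a \<in> Hs" by (rule F5[of _ "{a}"]) (use a ac in \<open>auto intro: subgroup.m_inv_closed\<close>)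
  next
    fix a b assume ab: "a \<in> Hs" "b \<in> Hs"
    then have abc: "a \<in> carrier G" "b \<in> carrier G" unfolding Hs_def using Isc by auto
    show "a \<otimes> b \<in> Hs" by (rule F5[of _ "{a, b}"]) (use ab abc in \<open>auto intro: subgroup.m_closed\<close>)
  qed
  have HsB: "Hs \<in> Bas G (Is n) (Es n)" for n
    using HsG F1 unfolding Bas_def Hs_def by blast
  show ?thesis
  proof (intro exI[of _ Hs] conjI allI impI)
    show "Hs \<in> Bas G I0 E0" using HsB[of 0] f(2) unfolding Is_def Es_def by simp
  next
    fix k show "Hs \<in> W k" using HsB[of "Suc k"] f(6)[of k] unfolding Is_def Es_def by auto
  next
    fix I E assume IE: "fs G I" "fs G E" "Hs \<in> Bas G I E"
    have "finite I" "I \<subseteq> Hs" using IE unfolding fs_def Bas_def by auto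
    then obtain m1 where m1: "I \<subseteq> Is m1" using finI by blast
    have "\<forall>a\<in>E. \<exists>n. a \<in> Es n"
    proof
      fix a assume "a \<in> E"
      then have "a \<in> carrier G" "a \<notin> Hs" using IE unfolding fs_def Bas_def by auto
      then show "\<exists>n. a \<in> Es n" using F2 by blast
    qed
    then obtain m2 where m2: "E \<subseteq> Es m2"
      using fin_mono[of E Es, OF _ EsS] IE(2) unfolding fs_def by blast
    let ?N = "max m1 m2"
    have "Bas G (Is ?N) (Es ?N) \<subseteq> Bas G I E"
      using Imono[of m1 ?N] Emono[of m2 ?N] m1 m2 by (intro Bas_anti) auto
    moreover have "Bas G (Is ?N) (Es ?N) \<inter> P \<noteq> {}" using f(1)[of ?N] unfolding good_def Is_def Es_def by simp
    ultimately show "Bas G I E \<inter> P \<noteq> {}" by blast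
  qed
qed


lemma closure_P:
  assumes PS: "P \<subseteq> topspace (Sub_inf_top G)"
  shows "H \<in> Sub_inf_top G closure_of P \<longleftrightarrow> H \<in> topspace (Sub_inf_top G) \<and>
     (\<forall>I E. fs G I \<longrightarrow> fs G E \<longrightarrow> H \<in> Bas G I E \<longrightarrow> Bas G I E \<inter> P \<noteq> {})"
proof
  assume H: "H \<in> Sub_inf_top G closure_of P"
  have Ht: "H \<in> topspace (Sub_inf_top G)" using subsetD[OF closure_of_subset_topspace H] .
  have "Bas G I E \<inter> P \<noteq> {}" if IE: "fs G I" "fs G E" "H \<in> Bas G I E" for I E
  proof -
    have "openin (Sub_inf_top G) (Bas G I E \<inter> topspace (Sub_inf_top G))"
      by (rule open_Sub_inf_Bas[OF IE(1,2)])
    moreover have "H \<in> Bas G I E \<inter> topspace (Sub_inf_top G)" using IE(3) Ht by simp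
    ultimately obtain y where "y \<in> P" "y \<in> Bas G I E \<inter> topspace (Sub_inf_top G)"
      using H unfolding closure_of_def by blast
    then show ?thesis by blast
  qed
  then show "H \<in> topspace (Sub_inf_top G) \<and>
     (\<forall>I E. fs G I \<longrightarrow> fs G E \<longrightarrow> H \<in> Bas G I E \<longrightarrow> Bas G I E \<inter> P \<noteq> {})" using Ht by blast
next
  assume A: "H \<in> topspace (Sub_inf_top G) \<and>
     (\<forall>I E. fs G I \<longrightarrow> fs G E \<longrightarrow> H \<in> Bas G I E \<longrightarrow> Bas G I E \<inter> P \<noteq> {})"
  have "\<exists>y\<in>P. y \<in> T" if T: "H \<in> T" "openin (Sub_inf_top G) T" for T
  proof -
    obtain U where U: "openin (Sub_top G) U"
      "T = U \<inter> {\<Lambda>. subgroup \<Lambda> G \<and> infinite (rcosets \<Lambda>)}"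
      using T(2) unfolding Sub_inf_top_def openin_subtopology by blast
    then have "H \<in> U" using T(1) by simp
    then obtain I E where IE: "fs G I" "fs G E" "H \<in> Bas G I E" "Bas G I E \<subseteq> U"
      using open_Sub_top_D[OF U(1)] by blast
    then have "Bas G I E \<inter> P \<noteq> {}" using A by blast
    then obtain y where y: "y \<in> Bas G I E" "y \<in> P" by blast
    then have "y \<in> {\<Lambda>. subgroup \<Lambda> G \<and> infinite (rcosets \<Lambda>)}" using PS topspace_Sub_inf by auto
    then have "y \<in> T" using y IE(4) U(2) by blast
    then show ?thesis using y(2) by blast
  qed
  then show "H \<in> Sub_inf_top G closure_of P" using A unfolding closure_of_def by blast
qed

lemma main_aux:
  assumes cG: "countable (carrier G)"
    and PS: "P \<subseteq> topspace (Sub_inf_top G)"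
    and cs: "cond_star G P"
  shows "gdelta_in (subtopology (Sub_inf_top G) (Sub_inf_top G closure_of P))
            (HT G \<inter> (Sub_inf_top G closure_of P))
       \<and> (subtopology (Sub_inf_top G) (Sub_inf_top G closure_of P)) closure_of
            (HT G \<inter> (Sub_inf_top G closure_of P))
         = Sub_inf_top G closure_of P"
proof -
  define SS where "SS = {\<Lambda>. subgroup \<Lambda> G \<and> infinite (rcosets \<Lambda>)}"
  have tS: "topspace (Sub_inf_top G) = SS" unfolding SS_def by (rule topspace_Sub_inf)
  define Y where "Y = Sub_inf_top G closure_of P"
  define Z where "Z = subtopology (Sub_inf_top G) Y"
  have YS: "Y \<subseteq> SS" unfolding Y_def tS[symmetric] by (rule closure_of_subset_topspace)
  have tZ: "topspace Z = Y" unfolding Z_def using YS tS by (intro topspace_subtopology_subset) simp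
  define Idx where "Idx = {p :: 'a list \<times> 'a list. length (fst p) = length (snd p) \<and>
      set (fst p) \<subseteq> carrier G \<and> set (snd p) \<subseteq> carrier G}"
  have cIdx: "countable Idx"
  proof (rule countable_subset)
    show "Idx \<subseteq> lists (carrier G) \<times> lists (carrier G)" unfolding Idx_def by auto
    show "countable (lists (carrier G) \<times> lists (carrier G))" using cG by auto
  qed
  have HTY: "H \<in> HT G \<longleftrightarrow> (\<forall>p\<in>Idx. H \<in> Wt (fst p) (snd p))" if "H \<in> SS" for H
  proof -
    have sH: "subgroup H G" "infinite (rcosets H)" using that unfolding SS_def by auto
    have "H \<in> HT G \<longleftrightarrow> highly_transitive_coset_action G H" unfolding HT_def using sH by simp
    also have "\<dots> \<longleftrightarrow> (\<forall>xs ys. length xs = length ys \<and> set xs \<subseteq> carrier G \<and> set ys \<subseteq> carrier G \<longrightarrow> H \<in> Wt xs ys)"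
      by (rule HT_iff[OF sH(1)])
    also have "\<dots> \<longleftrightarrow> (\<forall>p\<in>Idx. H \<in> Wt (fst p) (snd p))" unfolding Idx_def by auto
    finally show ?thesis .
  qed
  have openWt: "openin Z (Y \<inter> Wt (fst p) (snd p))" if "p \<in> Idx" for p
  proof -
    have "openin (Sub_top G) (Wt (fst p) (snd p))" using that unfolding Idx_def by (intro Wt_open) auto
    then have "openin (Sub_inf_top G) (Wt (fst p) (snd p) \<inter> SS)"
      unfolding Sub_inf_top_def SS_def by (rule openin_subtopology_Int)
    then have "openin Z (Y \<inter> (Wt (fst p) (snd p) \<inter> SS))" unfolding Z_def by (rule openin_subtopology_Int2)
    moreover have "Y \<inter> (Wt (fst p) (snd p) \<inter> SS) = Y \<inter> Wt (fst p) (snd p)" using YS by auto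
    ultimately show ?thesis by simp
  qed
  have part1: "gdelta_in Z (HT G \<inter> Y)"
    unfolding gdelta_in_alt
  proof
    show "HT G \<inter> Y \<subseteq> topspace Z" using tZ by auto
    define U where "U = insert Y ((\<lambda>p. Y \<inter> Wt (fst p) (snd p)) ` Idx)"
    have "countable U" unfolding U_def using cIdx by simp
    moreover have "U \<subseteq> Collect (openin Z)"
    proof
      fix u assume "u \<in> U"
      then consider "u = Y" | p where "p \<in> Idx" "u = Y \<inter> Wt (fst p) (snd p)" unfolding U_def by blast
      then show "u \<in> Collect (openin Z)"
      proof cases
        case 1
        then show ?thesis using openin_topspace[of Z] tZ by simp
      next
        case 2
        then show ?thesis using openWt by simp
      qed
    qed
    moreover have "\<Inter>U = HT G \<inter> Y"
    proof (rule Set.set_eqI)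
      fix H
      have "H \<in> \<Inter>U \<longleftrightarrow> H \<in> Y \<and> (\<forall>p\<in>Idx. H \<in> Wt (fst p) (snd p))" unfolding U_def by auto
      also have "\<dots> \<longleftrightarrow> H \<in> HT G \<inter> Y" using HTY YS by auto
      finally show "H \<in> \<Inter>U \<longleftrightarrow> H \<in> HT G \<inter> Y" .
    qed
    ultimately show "(countable intersection_of openin Z) (HT G \<inter> Y)"
      unfolding intersection_of_def by blast
  qed
  define enum where "enum = from_nat_into Idx"
  have "([], []) \<in> Idx" unfolding Idx_def by simp
  then have Idxne: "Idx \<noteq> {}" by blast
  have enumI: "enum k \<in> Idx" for k unfolding enum_def by (rule from_nat_into[OF Idxne])
  have enumS: "\<exists>k. enum k = p" if "p \<in> Idx" for p
  proof -
    have "p \<in> range enum" unfolding enum_def using range_from_nat_into[OF Idxne cIdx] that by simp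
    then show ?thesis by auto
  qed
  define W where "W k = Wt (fst (enum k)) (snd (enum k)) \<inter> Cnt k" for k
  have Wo: "openin (Sub_top G) (W k)" for k
    unfolding W_def using enumI[of k] unfolding Idx_def
    by (intro openin_Int Wt_open Cnt_open) auto
  have Wd: "Bas G I E \<inter> P \<inter> W k \<noteq> {}" if IE: "fs G I" "fs G E" "Bas G I E \<inter> P \<noteq> {}" for k I E
  proof -
    obtain H0 where H0: "H0 \<in> Bas G I E" "H0 \<in> P" using IE(3) by blast
    have e: "set (fst (enum k)) \<subseteq> carrier G" "set (snd (enum k)) \<subseteq> carrier G"
      "length (fst (enum k)) = length (snd (enum k))" using enumI[of k] unfolding Idx_def by auto
    obtain H2 where H2: "H2 \<in> P" "H2 \<in> Bas G I E" "H2 \<in> Wt (fst (enum k)) (snd (enum k))"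
      using Wt_dense[OF cs PS H0(2) H0(1) IE(1,2) e] by blast
    have "H2 \<in> SS" using H2(1) PS tS by auto
    then have "H2 \<in> Cnt k" using infinite_iff_Cnt unfolding SS_def by auto
    then have "H2 \<in> Bas G I E \<inter> P \<inter> W k" using H2 unfolding W_def by auto
    then show ?thesis by blast
  qed
  have dense: "H \<in> Sub_inf_top G closure_of (HT G \<inter> Y)" if HY: "H \<in> Y" for H
  proof -
    have "\<exists>y\<in>HT G \<inter> Y. y \<in> T" if T: "H \<in> T" "openin (Sub_inf_top G) T" for T
    proof -
      obtain U where U: "openin (Sub_top G) U" "T = U \<inter> SS"
        using T(2) unfolding Sub_inf_top_def openin_subtopology SS_def by blast
      then have "H \<in> U" using T(1) by simp
      then obtain I E where IE: "fs G I" "fs G E" "H \<in> Bas G I E" "Bas G I E \<subseteq> U"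
        using open_Sub_top_D[OF U(1)] by blast
      have "Bas G I E \<inter> P \<noteq> {}" using HY IE closure_P[OF PS] unfolding Y_def by blast
      then obtain Hs where Hs: "Hs \<in> Bas G I E" "\<forall>k. Hs \<in> W k"
        "\<forall>I E. fs G I \<longrightarrow> fs G E \<longrightarrow> Hs \<in> Bas G I E \<longrightarrow> Bas G I E \<inter> P \<noteq> {}"
        using construct[where W=W and P=P, OF cG Wo Wd IE(1,2)] by blast
      have sHs: "subgroup Hs G" using Hs(1) unfolding Bas_def by simp
      have "\<forall>k. Hs \<in> Cnt k" using Hs(2) unfolding W_def by simp
      then have "infinite (rcosets Hs)" using infinite_iff_Cnt[OF sHs] by simp
      then have HsS: "Hs \<in> SS" unfolding SS_def using sHs by simp
      then have "Hs \<in> T" using U(2) IE(4) Hs(1) by blast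
      moreover have "Hs \<in> Y" unfolding Y_def using closure_P[OF PS] HsS tS Hs(3) by simp
      moreover have "Hs \<in> HT G"
      proof -
        have "\<forall>p\<in>Idx. Hs \<in> Wt (fst p) (snd p)"
        proof
          fix p assume "p \<in> Idx"
          then obtain k where "enum k = p" using enumS by blast
          then show "Hs \<in> Wt (fst p) (snd p)" using Hs(2) unfolding W_def by auto
        qed
        then show ?thesis using HTY[OF HsS] by simp
      qed
      ultimately show ?thesis by blast
    qed
    moreover have "H \<in> topspace (Sub_inf_top G)" using HY YS tS by auto
    ultimately show ?thesis unfolding closure_of_def by blast
  qed
  have part2: "Z closure_of (HT G \<inter> Y) = Y"
  proof -
    have "Z closure_of (HT G \<inter> Y) = Y \<inter> Sub_inf_top G closure_of (Y \<inter> (HT G \<inter> Y))"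
      unfolding Z_def by (rule closure_of_subtopology)
    also have "Y \<inter> (HT G \<inter> Y) = HT G \<inter> Y" by auto
    finally have eq: "Z closure_of (HT G \<inter> Y) = Y \<inter> Sub_inf_top G closure_of (HT G \<inter> Y)" .
    show ?thesis unfolding eq using dense by auto
  qed
  show ?thesis using part1 part2 unfolding Z_def Y_def by simp
qed

end

theorem mainTheorem7:
  fixes G :: "('a, 'b) monoid_scheme" and P :: "'a set set"
  assumes "group G"
    and "countable (carrier G)"
    and "P \<subseteq> topspace (Sub_inf_top G)"
    and "cond_star G P"
  shows "gdelta_in (subtopology (Sub_inf_top G) (Sub_inf_top G closure_of P))
            (HT G \<inter> (Sub_inf_top G closure_of P))
       \<and> (subtopology (Sub_inf_top G) (Sub_inf_top G closure_of P)) closure_of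
            (HT G \<inter> (Sub_inf_top G closure_of P))
         = Sub_inf_top G closure_of P"
  by (rule group.main_aux[OF assms(1) assms(2) assms(3) assms(4)])

end
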